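(* Let $\mathcal C$ be an $R$-coring satisfying the left $\alpha$-condition, and suppose $\mathcal C=\bigoplus_{i\in I}C_i$ as left $\mathcal C$-comodules. Then $\mathrm{Rat}^{\mathcal C}({}^*C_i)$ is dense in ${}^*C_i$ (finite topology) for every $i\in I$ if and only if $\mathrm{Rat}^{\mathcal C}({}^*\mathcal C)$ is dense in ${}^*\mathcal C$ (finite topology).
   Context: An $R$-coring is a triple $(\mathcal C,\Delta,\varepsilon)$ with $\mathcal C$ an $R$-bimodule and $\Delta:\mathcal C\to\mathcal C\otimes_R\mathcal C$, $\varepsilon:\mathcal C\to R$ coassociative and counital $R$-bimodule maps; write $\Delta(c)=c_{(1)}\otimes_R c_{(2)}$. ${}^*\mathcal C={}_R\mathrm{Hom}(\mathcal C,R)$ is a ring with product $(f\#g)(c)=g(c_{(1)}f(c_{(2)}))$. $\mathcal C$ satisfies the left $\alpha$-condition if it is locally projective as a left $R$-module. A left $\mathcal C$-comodule is a left $R$-module $M$ with a coassociative counital left $R$-linear map $M\to\mathcal C\otimes_R M$, $m\mapsto m_{[-1]}\otimes m_{[0]}$; $\mathcal C$ is a left comodule via $\Delta$. For a left comodule $M$, ${}^*M={}_R\mathrm{Hom}(M,R)$ is a right ${}^*\mathcal C$-module via $(h\cdot f)(m)=f(m_{[-1]}h(m_{[0]}))$ (for $M=\mathcal C$ this is right multiplication in ${}^*\mathcal C$). For a right ${}^*\mathcal C$-module $N$, $\mathrm{Rat}^{\mathcal C}(N)$ is the set of $n\in N$ for which there is $\sum_i n_i\otimes c_i\in N\otimes_R\mathcal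 C$ with $n\cdot f=\sum_i n_if(c_i)$ for all $f\in{}^*\mathcal C$ (the largest rational submodule). The finite topology on ${}_R\mathrm{Hom}(M,R)$ has basic open sets $\{g\mid g(x)=f(x)\ \forall x\in F\}$, $F\subseteq M$ finite. *)

theory Defs
  imports Main
begin

text \<open>
  The coring C is the whole type 'c (an abelian group) with a left R-action lact
  (lact r c = r c) and a right R-action ract (ract c r = c r).
  Elements of tensor products over R are represented by finite formal sums
  (lists of simple tensors); equality in the tensor product is the equality modulo
  the subgroup generated by the defining (bi)additivity and R-balancing relations.
\<close>

definition delta :: "'a \<Rightarrow> 'a \<Rightarrow> int" where
  "delta p = (\<lambda>q. if q = p then 1 else 0)"

definition fcount :: "'a list \<Rightarrow> 'a \<Rightarrow> int" where
  "fcount xs = (\<lambda>q. int (length (filter (\<lambda>p. p = q) xs)))"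

text \<open>Relations subgroup defining C_R \<otimes>_R {}_RC (inside the free abelian group on C \<times> C).\<close>
inductive_set tensor2_rel ::
  "('r::ring_1 \<Rightarrow> 'c::ab_group_add \<Rightarrow> 'c) \<Rightarrow> ('c \<Rightarrow> 'r \<Rightarrow> 'c) \<Rightarrow> ('c \<times> 'c \<Rightarrow> int) set"
  for lact ract where
  zero: "(\<lambda>_. 0) \<in> tensor2_rel lact ract"
| addl: "(\<lambda>q. delta (a + a', b) q - delta (a, b) q - delta (a', b) q) \<in> tensor2_rel lact ract"
| addr: "(\<lambda>q. delta (a, b + b') q - delta (a, b) q - delta (a, b') q) \<in> tensor2_rel lact ract"
| bal: "(\<lambda>q. delta (ract a r, b) q - delta (a, lact r b) q) \<in> tensor2_rel lact ract"
| plus: "x \<in> tensor2_rel lact ract \<Longrightarrow> y \<in> tensor2_rel lact ract \<Longrightarrow>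
         (\<lambda>q. x q + y q) \<in> tensor2_rel lact ract"
| neg: "x \<in> tensor2_rel lact ract \<Longrightarrow> (\<lambda>q. - x q) \<in> tensor2_rel lact ract"

definition teq2 :: "('r::ring_1 \<Rightarrow> 'c::ab_group_add \<Rightarrow> 'c) \<Rightarrow> ('c \<Rightarrow> 'r \<Rightarrow> 'c) \<Rightarrow>
    ('c \<times> 'c) list \<Rightarrow> ('c \<times> 'c) list \<Rightarrow> bool" where
  "teq2 lact ract xs ys \<longleftrightarrow> (\<lambda>q. fcount xs q - fcount ys q) \<in> tensor2_rel lact ract"

inductive_set tensor3_rel ::
  "('r::ring_1 \<Rightarrow> 'c::ab_group_add \<Rightarrow> 'c) \<Rightarrow> ('c \<Rightarrow> 'r \<Rightarrow> 'c) \<Rightarrow> ('c \<times> 'c \<times> 'c \<Rightarrow> int) set"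
  for lact ract where
  zero: "(\<lambda>_. 0) \<in> tensor3_rel lact ract"
| add1: "(\<lambda>q. delta (a + a', b, c) q - delta (a, b, c) q - delta (a', b, c) q) \<in> tensor3_rel lact ract"
| add2: "(\<lambda>q. delta (a, b + b', c) q - delta (a, b, c) q - delta (a, b', c) q) \<in> tensor3_rel lact ract"
| add3: "(\<lambda>q. delta (a, b, c + c') q - delta (a, b, c) q - delta (a, b, c') q) \<in> tensor3_rel lact ract"
| bal12: "(\<lambda>q. delta (ract a r, b, c) q - delta (a, lact r b, c) q) \<in> tensor3_rel lact ract"
| bal23: "(\<lambda>q. delta (a, ract b r, c) q - delta (a, b, lact r c) q) \<in> tensor3_rel lact ract"
| plus: "x \<in> tensor3_rel lact ract \<Longrightarrow> y \<in> tensor3_rel lact ract \<Longrightarrow>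
         (\<lambda>q. x q + y q) \<in> tensor3_rel lact ract"
| neg: "x \<in> tensor3_rel lact ract \<Longrightarrow> (\<lambda>q. - x q) \<in> tensor3_rel lact ract"

definition teq3 :: "('r::ring_1 \<Rightarrow> 'c::ab_group_add \<Rightarrow> 'c) \<Rightarrow> ('c \<Rightarrow> 'r \<Rightarrow> 'c) \<Rightarrow>
    ('c \<times> 'c \<times> 'c) list \<Rightarrow> ('c \<times> 'c \<times> 'c) list \<Rightarrow> bool" where
  "teq3 lact ract xs ys \<longleftrightarrow> (\<lambda>q. fcount xs q - fcount ys q) \<in> tensor3_rel lact ract"

definition bimodule :: "('r::ring_1 \<Rightarrow> 'c::ab_group_add \<Rightarrow> 'c) \<Rightarrow> ('c \<Rightarrow> 'r \<Rightarrow> 'c) \<Rightarrow> bool" where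
  "bimodule lact ract \<longleftrightarrow>
     (\<forall>r x y. lact r (x + y) = lact r x + lact r y) \<and>
     (\<forall>r s x. lact (r + s) x = lact r x + lact s x) \<and>
     (\<forall>r s x. lact (r * s) x = lact r (lact s x)) \<and>
     (\<forall>x. lact 1 x = x) \<and>
     (\<forall>r x y. ract (x + y) r = ract x r + ract y r) \<and>
     (\<forall>r s x. ract x (r + s) = ract x r + ract x s) \<and>
     (\<forall>r s x. ract x (r * s) = ract (ract x r) s) \<and>
     (\<forall>x. ract x 1 = x) \<and>
     (\<forall>r s x. ract (lact r x) s = lact r (ract x s))"

definition coring :: "('r::ring_1 \<Rightarrow> 'c::ab_group_add \<Rightarrow> 'c) \<Rightarrow> ('c \<Rightarrow> 'r \<Rightarrow> 'c) \<Rightarrow>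
    ('c \<Rightarrow> ('c \<times> 'c) list) \<Rightarrow> ('c \<Rightarrow> 'r) \<Rightarrow> bool" where
  "coring lact ract Delta eps \<longleftrightarrow>
     bimodule lact ract \<and>
     \<comment> \<open>Delta is an R-bimodule map\<close>
     (\<forall>x y. teq2 lact ract (Delta (x + y)) (Delta x @ Delta y)) \<and>
     (\<forall>r x. teq2 lact ract (Delta (lact r x)) (map (\<lambda>(a, b). (lact r a, b)) (Delta x))) \<and>
     (\<forall>r x. teq2 lact ract (Delta (ract x r)) (map (\<lambda>(a, b). (a, ract b r)) (Delta x))) \<and>
     \<comment> \<open>eps is an R-bimodule map\<close>
     (\<forall>x y. eps (x + y) = eps x + eps y) \<and>
     (\<forall>r x. eps (lact r x) = r * eps x) \<and>
     (\<forall>r x. eps (ract x r) = eps x * r) \<and>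
     \<comment> \<open>coassociativity\<close>
     (\<forall>c. teq3 lact ract
        (concat (map (\<lambda>(a, b). map (\<lambda>(x, y). (x, y, b)) (Delta a)) (Delta c)))
        (concat (map (\<lambda>(a, b). map (\<lambda>(x, y). (a, x, y)) (Delta b)) (Delta c)))) \<and>
     \<comment> \<open>counitality\<close>
     (\<forall>c. (\<Sum>(a, b)\<leftarrow>Delta c. lact (eps a) b) = c) \<and>
     (\<forall>c. (\<Sum>(a, b)\<leftarrow>Delta c. ract a (eps b)) = c)"

text \<open>Left R-linear maps M \<rightarrow> R (extended by 0 outside M): the left dual {}^*M.\<close>
definition ldual :: "('r::ring_1 \<Rightarrow> 'c::ab_group_add \<Rightarrow> 'c) \<Rightarrow> 'c set \<Rightarrow> ('c \<Rightarrow> 'r) set" where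
  "ldual lact M = {h. (\<forall>x\<in>M. \<forall>y\<in>M. h (x + y) = h x + h y) \<and>
                      (\<forall>r. \<forall>x\<in>M. h (lact r x) = r * h x) \<and>
                      (\<forall>x. x \<notin> M \<longrightarrow> h x = 0)}"

text \<open>Left alpha-condition: C is locally projective as a left R-module
  (finite dual basis formulation).\<close>
definition left_alpha :: "('r::ring_1 \<Rightarrow> 'c::ab_group_add \<Rightarrow> 'c) \<Rightarrow> bool" where
  "left_alpha lact \<longleftrightarrow>
     (\<forall>F. finite F \<longrightarrow> (\<exists>ps :: (('c \<Rightarrow> 'r) \<times> 'c) list.
        (\<forall>(f, c)\<in>set ps. f \<in> ldual lact UNIV) \<and>
        (\<forall>x\<in>F. x = (\<Sum>(f, c)\<leftarrow>ps. lact (f x) c))))"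

definition lsubmodule :: "('r::ring_1 \<Rightarrow> 'c::ab_group_add \<Rightarrow> 'c) \<Rightarrow> 'c set \<Rightarrow> bool" where
  "lsubmodule lact M \<longleftrightarrow> 0 \<in> M \<and> (\<forall>x\<in>M. \<forall>y\<in>M. x + y \<in> M) \<and> (\<forall>x\<in>M. - x \<in> M) \<and>
     (\<forall>r. \<forall>x\<in>M. lact r x \<in> M)"

definition subcomodule :: "('r::ring_1 \<Rightarrow> 'c::ab_group_add \<Rightarrow> 'c) \<Rightarrow> ('c \<Rightarrow> 'r \<Rightarrow> 'c) \<Rightarrow>
    ('c \<Rightarrow> ('c \<times> 'c) list) \<Rightarrow> 'c set \<Rightarrow> bool" where
  "subcomodule lact ract Delta M \<longleftrightarrow> lsubmodule lact M \<and>
     (\<forall>m\<in>M. \<exists>ys. set ys \<subseteq> UNIV \<times> M \<and> teq2 lact ract ys (Delta m))"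

definition subcoact :: "('r::ring_1 \<Rightarrow> 'c::ab_group_add \<Rightarrow> 'c) \<Rightarrow> ('c \<Rightarrow> 'r \<Rightarrow> 'c) \<Rightarrow>
    ('c \<Rightarrow> ('c \<times> 'c) list) \<Rightarrow> 'c set \<Rightarrow> 'c \<Rightarrow> ('c \<times> 'c) list" where
  "subcoact lact ract Delta M m = (SOME ys. set ys \<subseteq> UNIV \<times> M \<and> teq2 lact ract ys (Delta m))"

definition comodule_decomp :: "('r::ring_1 \<Rightarrow> 'c::ab_group_add \<Rightarrow> 'c) \<Rightarrow> ('c \<Rightarrow> 'r \<Rightarrow> 'c) \<Rightarrow>
    ('c \<Rightarrow> ('c \<times> 'c) list) \<Rightarrow> ('i \<Rightarrow> 'c set) \<Rightarrow> bool" where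
  "comodule_decomp lact ract Delta Ci \<longleftrightarrow>
     (\<forall>i. subcomodule lact ract Delta (Ci i)) \<and>
     (\<forall>c. \<exists>!x. finite {i. x i \<noteq> 0} \<and> (\<forall>i. x i \<in> Ci i) \<and> c = sum x {i. x i \<noteq> 0})"

text \<open>Right {}^*C-action on {}^*M for a left comodule M with coaction rho:
  (h . f)(m) = f(m_[-1] h(m_[0])).\<close>
definition dact :: "('c::ab_group_add \<Rightarrow> 'r::ring_1 \<Rightarrow> 'c) \<Rightarrow> ('c \<Rightarrow> ('c \<times> 'c) list) \<Rightarrow>
    'c set \<Rightarrow> ('c \<Rightarrow> 'r) \<Rightarrow> ('c \<Rightarrow> 'r) \<Rightarrow> ('c \<Rightarrow> 'r)" where
  "dact ract rho M h f = (\<lambda>m. if m \<in> M then f (\<Sum>(a, b)\<leftarrow>rho m. ract a (h b)) else 0)"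

text \<open>Rat^C({}^*M): elements n with n . f = sum_k n_k f(c_k) for all f in {}^*C,
  where (n_k r)(m) = n_k(m) r is the right R-module structure of {}^*M.\<close>
definition ratdual :: "('r::ring_1 \<Rightarrow> 'c::ab_group_add \<Rightarrow> 'c) \<Rightarrow> ('c \<Rightarrow> 'r \<Rightarrow> 'c) \<Rightarrow>
    ('c \<Rightarrow> ('c \<times> 'c) list) \<Rightarrow> 'c set \<Rightarrow> ('c \<Rightarrow> 'r) set" where
  "ratdual lact ract rho M = {n \<in> ldual lact M. \<exists>ps :: (('c \<Rightarrow> 'r) \<times> 'c) list.
      (\<forall>(n', c)\<in>set ps. n' \<in> ldual lact M) \<and>
      (\<forall>f\<in>ldual lact UNIV. dact ract rho M n f = (\<lambda>m. \<Sum>(n', c)\<leftarrow>ps. n' m * f c))}"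

definition finite_dense :: "'c set \<Rightarrow> ('c \<Rightarrow> 'r) set \<Rightarrow> ('c \<Rightarrow> 'r) set \<Rightarrow> bool" where
  "finite_dense M S D \<longleftrightarrow>
     (\<forall>g\<in>S. \<forall>F. finite F \<and> F \<subseteq> M \<longrightarrow> (\<exists>d\<in>D. \<forall>x\<in>F. d x = g x))"

end

theory Submission
  imports Defs
begin


definition zsc :: "int \<Rightarrow> 'g::ab_group_add \<Rightarrow> 'g" where
  "zsc n g = sum_list (replicate (nat n) g) - sum_list (replicate (nat (-n)) g)"

lemma rep_add: "sum_list (replicate (a+b) g) = sum_list (replicate a g) + sum_list (replicate b (g::'g::ab_group_add))"
  by (simp add: replicate_add)

lemma zsc_repr:
  assumes "n = int a - int b"
  shows "zsc n (g::'g::ab_group_add) = sum_list (replicate a g) - sum_list (replicate b g)"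
proof (cases "b \<le> a")
  case True
  then have "a = b + nat n" "nat (-n) = 0" using assms by auto
  then show ?thesis unfolding zsc_def by (simp add: rep_add)
next
  case False
  then have "b = a + nat (-n)" "nat n = 0" using assms by auto
  then show ?thesis unfolding zsc_def by (simp add: rep_add)
qed

lemma zsc_add: "zsc (m+n) g = zsc m g + zsc n (g::'g::ab_group_add)"
proof -
  have "zsc (m+n) g = sum_list (replicate (nat m + nat n) g) - sum_list (replicate (nat (-m) + nat (-n)) g)"
    by (rule zsc_repr) auto
  also have "\<dots> = zsc m g + zsc n g" unfolding zsc_def rep_add by (simp add: algebra_simps)
  finally show ?thesis .
qed

lemma zsc_neg: "zsc (-n) g = - zsc n (g::'g::ab_group_add)"
  unfolding zsc_def by simp

lemma zsc_diff: "zsc (m-n) g = zsc m g - zsc n (g::'g::ab_group_add)"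
  using zsc_add[of m "-n" g] zsc_neg[of n g] by simp

lemma zsc_0[simp]: "zsc 0 g = 0" unfolding zsc_def by simp
lemma zsc_1[simp]: "zsc 1 g = g" unfolding zsc_def by simp

lemma zsc_delta: "zsc (delta p q) g = (if q = p then g else 0)"
  unfolding delta_def by simp

lemma sum_zsc_delta:
  assumes "finite T" "p \<in> T"
  shows "(\<Sum>q\<in>T. zsc (delta p q) (\<phi> q)) = (\<phi> p :: 'g::ab_group_add)"
  using assms by (simp add: zsc_delta)

lemma sum_extend:
  assumes "finite T" "S \<subseteq> T" "{q. x q \<noteq> 0} \<subseteq> S"
  shows "(\<Sum>q\<in>S. zsc (x q) (\<phi> q)) = (\<Sum>q\<in>T. zsc (x q) (\<phi> q) :: 'g::ab_group_add)"
proof (rule sum.mono_neutral_left)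
  show "\<forall>i\<in>T - S. zsc (x i) (\<phi> i) = 0"
  proof
    fix i assume "i \<in> T - S"
    then have "x i = 0" using assms(3) by blast
    then show "zsc (x i) (\<phi> i) = 0" by simp
  qed
qed (use assms in auto)

lemma supp_delta3: "{q. delta p1 q - delta p2 q - delta p3 q \<noteq> 0} \<subseteq> {p1,p2,p3}"
  unfolding delta_def by auto

lemma sum_delta3:
  assumes "finite T" "p1 \<in> T" "p2 \<in> T" "p3 \<in> T"
  shows "(\<Sum>q\<in>T. zsc (delta p1 q - delta p2 q - delta p3 q) (\<phi> q)) = \<phi> p1 - \<phi> p2 - (\<phi> p3 :: 'g::ab_group_add)"
  using assms by (simp add: zsc_diff sum_subtractf sum_zsc_delta)

lemma sum_delta2:
  assumes "finite T" "p1 \<in> T" "p2 \<in> T"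
  shows "(\<Sum>q\<in>T. zsc (delta p1 q - delta p2 q) (\<phi> q)) = \<phi> p1 - (\<phi> p2 :: 'g::ab_group_add)"
  using assms by (simp add: zsc_diff sum_subtractf sum_zsc_delta)


lemma rel_lin:
  fixes \<phi> :: "'c::ab_group_add \<times> 'c \<Rightarrow> 'g::ab_group_add"
  assumes A1: "\<And>a a' b. \<phi> (a+a', b) = \<phi> (a,b) + \<phi> (a',b)"
    and A2: "\<And>a b b'. \<phi> (a, b+b') = \<phi> (a,b) + \<phi> (a,b')"
    and A3: "\<And>a r b. \<phi> (ract a r, b) = \<phi> (a, lact r b)"
    and x: "x \<in> tensor2_rel lact ract"
  shows "finite {q. x q \<noteq> 0} \<and> (\<forall>S. finite S \<longrightarrow> {q. x q \<noteq> 0} \<subseteq> S \<longrightarrow> (\<Sum>q\<in>S. zsc (x q) (\<phi> q)) = 0)"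
  using x
proof induct
  case zero
  then show ?case by simp
next
  case (addl a a' b)
  let ?x = "\<lambda>q. delta (a + a', b) q - delta (a, b) q - delta (a', b) q"
  have fin: "finite {q. ?x q \<noteq> 0}" by (rule finite_subset[OF supp_delta3]) simp
  show ?case
  proof (intro conjI allI impI fin)
    fix S assume S: "finite S" "{q. ?x q \<noteq> 0} \<subseteq> S"
    let ?T = "S \<union> {(a + a', b), (a, b), (a', b)}"
    have "(\<Sum>q\<in>S. zsc (?x q) (\<phi> q)) = (\<Sum>q\<in>?T. zsc (?x q) (\<phi> q))"
      by (rule sum_extend) (use S in auto)
    also have "\<dots> = \<phi> (a + a', b) - \<phi> (a, b) - \<phi> (a', b)" by (rule sum_delta3) (use S in auto)
    also have "\<dots> = 0" by (simp add: A1)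
    finally show "(\<Sum>q\<in>S. zsc (?x q) (\<phi> q)) = 0" .
  qed
next
  case (addr a b b')
  let ?x = "\<lambda>q. delta (a, b + b') q - delta (a, b) q - delta (a, b') q"
  have fin: "finite {q. ?x q \<noteq> 0}" by (rule finite_subset[OF supp_delta3]) simp
  show ?case
  proof (intro conjI allI impI fin)
    fix S assume S: "finite S" "{q. ?x q \<noteq> 0} \<subseteq> S"
    let ?T = "S \<union> {(a, b + b'), (a, b), (a, b')}"
    have "(\<Sum>q\<in>S. zsc (?x q) (\<phi> q)) = (\<Sum>q\<in>?T. zsc (?x q) (\<phi> q))"
      by (rule sum_extend) (use S in auto)
    also have "\<dots> = \<phi> (a, b + b') - \<phi> (a, b) - \<phi> (a, b')" by (rule sum_delta3) (use S in auto)
    also have "\<dots> = 0" by (simp add: A2)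
    finally show "(\<Sum>q\<in>S. zsc (?x q) (\<phi> q)) = 0" .
  qed
next
  case (bal a r b)
  let ?x = "\<lambda>q. delta (ract a r, b) q - delta (a, lact r b) q"
  have fin: "finite {q. ?x q \<noteq> 0}"
    by (rule finite_subset[of _ "{(ract a r, b), (a, lact r b)}"]) (auto simp: delta_def)
  show ?case
  proof (intro conjI allI impI fin)
    fix S assume S: "finite S" "{q. ?x q \<noteq> 0} \<subseteq> S"
    let ?T = "S \<union> {(ract a r, b), (a, lact r b)}"
    have "(\<Sum>q\<in>S. zsc (?x q) (\<phi> q)) = (\<Sum>q\<in>?T. zsc (?x q) (\<phi> q))"
      by (rule sum_extend) (use S in auto)
    also have "\<dots> = \<phi> (ract a r, b) - \<phi> (a, lact r b)" by (rule sum_delta2) (use S in auto)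
    also have "\<dots> = 0" by (simp add: A3)
    finally show "(\<Sum>q\<in>S. zsc (?x q) (\<phi> q)) = 0" .
  qed
next
  case (plus x y)
  have fx: "finite {q. x q \<noteq> 0}" using plus(2) by (rule conjunct1)
  have fy: "finite {q. y q \<noteq> 0}" using plus(4) by (rule conjunct1)
  have fin: "finite {q. x q + y q \<noteq> 0}"
    by (rule finite_subset[of _ "{q. x q \<noteq> 0} \<union> {q. y q \<noteq> 0}"]) (use fx fy in auto)
  show ?case
  proof (intro conjI allI impI fin)
    fix S assume S: "finite S" "{q. x q + y q \<noteq> 0} \<subseteq> S"
    let ?T = "S \<union> {q. x q \<noteq> 0} \<union> {q. y q \<noteq> 0}"
    have fT: "finite ?T" using S fx fy by blast
    have hx: "(\<Sum>q\<in>?T. zsc (x q) (\<phi> q)) = 0"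
      by (rule plus(2)[THEN conjunct2, rule_format]) (use fT in auto)
    have hy: "(\<Sum>q\<in>?T. zsc (y q) (\<phi> q)) = 0"
      by (rule plus(4)[THEN conjunct2, rule_format]) (use fT in auto)
    have "(\<Sum>q\<in>S. zsc (x q + y q) (\<phi> q)) = (\<Sum>q\<in>?T. zsc (x q + y q) (\<phi> q))"
      by (rule sum_extend) (use S fT in auto)
    also have "\<dots> = (\<Sum>q\<in>?T. zsc (x q) (\<phi> q)) + (\<Sum>q\<in>?T. zsc (y q) (\<phi> q))"
      by (simp add: zsc_add sum.distrib)
    also have "\<dots> = 0" using hx hy by simp
    finally show "(\<Sum>q\<in>S. zsc (x q + y q) (\<phi> q)) = 0" .
  qed
next
  case (neg x)
  then show ?case by (simp add: zsc_neg sum_negf)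
qed

lemma fcount_Cons: "fcount (a # xs) q = delta a q + fcount xs q"
  unfolding fcount_def delta_def by auto

lemma fcount_supp: "{q. fcount xs q \<noteq> 0} \<subseteq> set xs"
  unfolding fcount_def by (auto simp: filter_empty_conv)

lemma fcount_sum:
  assumes "finite S" "set xs \<subseteq> S"
  shows "(\<Sum>q\<in>S. zsc (fcount xs q) (\<phi> q)) = sum_list (map \<phi> xs :: 'g::ab_group_add list)"
  using assms(2)
proof (induct xs)
  case Nil
  then show ?case by (simp add: fcount_def)
next
  case (Cons a xs)
  then show ?case using assms(1)
    by (simp add: fcount_Cons zsc_add sum.distrib sum_zsc_delta)
qed

lemma teq2_sum:
  fixes \<phi> :: "'c::ab_group_add \<times> 'c \<Rightarrow> 'g::ab_group_add"
  assumes A1: "\<And>a a' b. \<phi> (a+a', b) = \<phi> (a,b) + \<phi> (a',b)"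
    and A2: "\<And>a b b'. \<phi> (a, b+b') = \<phi> (a,b) + \<phi> (a,b')"
    and A3: "\<And>a r b. \<phi> (ract a r, b) = \<phi> (a, lact r b)"
    and t: "teq2 lact ract xs ys"
  shows "sum_list (map \<phi> xs) = sum_list (map \<phi> ys)"
proof -
  let ?x = "\<lambda>q. fcount xs q - fcount ys q"
  have rel: "?x \<in> tensor2_rel lact ract" using t unfolding teq2_def .
  let ?S = "set xs \<union> set ys"
  have "{q. ?x q \<noteq> 0} \<subseteq> {q. fcount xs q \<noteq> 0} \<union> {q. fcount ys q \<noteq> 0}" by auto
  then have sub: "{q. ?x q \<noteq> 0} \<subseteq> ?S" using fcount_supp[of xs] fcount_supp[of ys] by blast
  have "(\<Sum>q\<in>?S. zsc (?x q) (\<phi> q)) = 0"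
    using rel_lin[OF A1 A2 A3 rel] sub by auto
  moreover have "(\<Sum>q\<in>?S. zsc (?x q) (\<phi> q)) = sum_list (map \<phi> xs) - sum_list (map \<phi> ys)"
    by (simp add: zsc_diff sum_subtractf fcount_sum)
  ultimately show ?thesis by simp
qed



locale cs =
  fixes lact :: "'r::ring_1 \<Rightarrow> 'c::ab_group_add \<Rightarrow> 'c" and ract :: "'c \<Rightarrow> 'r \<Rightarrow> 'c"
    and Delta :: "'c \<Rightarrow> ('c \<times> 'c) list" and Ci :: "'i \<Rightarrow> 'c set"
  assumes bim: "bimodule lact ract"
    and Dadd: "\<And>x y. teq2 lact ract (Delta (x + y)) (Delta x @ Delta y)"
    and cd: "comodule_decomp lact ract Delta Ci"
begin

lemma ladd: "lact r (x+y) = lact r x + lact r y"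
proof -
  have "\<forall>r x y. lact r (x + y) = lact r x + lact r y" using bim unfolding bimodule_def by (rule conjunct1)
  then show ?thesis by blast
qed
lemma l0[simp]: "lact r 0 = 0" using ladd[of r 0 0] by simp
lemma radd1: "ract (x+y) r = ract x r + ract y r" using bim unfolding bimodule_def by blast
lemma radd2: "ract x (r+s) = ract x r + ract x s" using bim unfolding bimodule_def by blast
lemma r0[simp]: "ract x 0 = 0" using radd2[of x 0 0] by simp
lemma rmul: "ract x (r*s) = ract (ract x r) s" using bim unfolding bimodule_def by blast

lemma lsum: "lact r (sum g A) = (\<Sum>i\<in>A. lact r (g i))"
  using sum_comp_morphism[of "lact r" g A] ladd by (simp add: o_def)

lemma subc: "subcomodule lact ract Delta (Ci i)"
proof -
  have "\<forall>i. subcomodule lact ract Delta (Ci i)" using cd unfolding comodule_decomp_def by (rule conjunct1)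
  then show ?thesis by blast
qed
lemma lsubi: "lsubmodule lact (Ci i)" using subc unfolding subcomodule_def by (rule conjunct1)
lemma Ci_0: "0 \<in> Ci i" using lsubi unfolding lsubmodule_def by blast
lemma Ci_add: "x \<in> Ci i \<Longrightarrow> y \<in> Ci i \<Longrightarrow> x + y \<in> Ci i" using lsubi unfolding lsubmodule_def by blast
lemma Ci_lact: "x \<in> Ci i \<Longrightarrow> lact r x \<in> Ci i" using lsubi unfolding lsubmodule_def by blast

definition "dec c = (THE x. finite {i. x i \<noteq> 0} \<and> (\<forall>i. x i \<in> Ci i) \<and> c = sum x {i. x i \<noteq> 0})"

lemma dec_ex1: "\<exists>!x. finite {i. x i \<noteq> 0} \<and> (\<forall>i. x i \<in> Ci i) \<and> c = sum x {i. x i \<noteq> 0}"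
proof -
  have "\<forall>c. \<exists>!x. finite {i. x i \<noteq> 0} \<and> (\<forall>i. x i \<in> Ci i) \<and> c = sum x {i. x i \<noteq> 0}"
    using cd unfolding comodule_decomp_def by (rule conjunct2)
  then show ?thesis by blast
qed

lemma dec_spec: "finite {i. dec c i \<noteq> 0} \<and> (\<forall>i. dec c i \<in> Ci i) \<and> c = sum (dec c) {i. dec c i \<noteq> 0}"
  unfolding dec_def by (rule theI'[OF dec_ex1])

lemma dec_fin: "finite {i. dec c i \<noteq> 0}" using dec_spec by blast
lemma dec_mem: "dec c i \<in> Ci i" using dec_spec by blast

lemma dec_unique:
  assumes "finite {i. x i \<noteq> 0}" "\<forall>i. x i \<in> Ci i" "c = sum x {i. x i \<noteq> 0}"
  shows "dec c = x"
  unfolding dec_def by (rule the1_equality[OF dec_ex1]) (use assms in blast)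

lemma sum_supp:
  assumes "finite J" "{i. x i \<noteq> 0} \<subseteq> J"
  shows "sum x J = sum x {i. x i \<noteq> (0::'c)}"
  by (rule sum.mono_neutral_right) (use assms in auto)

lemma dec_sum:
  assumes "finite J" "{i. dec c i \<noteq> 0} \<subseteq> J"
  shows "sum (dec c) J = c"
proof -
  have h1: "sum (dec c) J = sum (dec c) {i. dec c i \<noteq> 0}" by (rule sum_supp[OF assms])
  have h2: "c = sum (dec c) {i. dec c i \<noteq> 0}" using dec_spec by blast
  show ?thesis using h1 h2 by (rule trans[OF _ sym])
qed

lemma dec_add: "dec (c + c') = (\<lambda>i. dec c i + dec c' i)"
proof (rule dec_unique)
  let ?U = "{i. dec c i \<noteq> 0} \<union> {i. dec c' i \<noteq> 0}"
  have fU: "finite ?U" using dec_fin by blast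
  show fin: "finite {i. dec c i + dec c' i \<noteq> 0}"
    by (rule finite_subset[OF _ fU]) auto
  show "\<forall>i. dec c i + dec c' i \<in> Ci i" using dec_mem Ci_add by blast
  have "sum (\<lambda>i. dec c i + dec c' i) {i. dec c i + dec c' i \<noteq> 0} = sum (\<lambda>i. dec c i + dec c' i) ?U"
    by (rule sum_supp[symmetric]) (use fU in auto)
  also have "\<dots> = sum (dec c) ?U + sum (dec c') ?U" by (rule sum.distrib)
  also have "sum (dec c) ?U = c" by (rule dec_sum[OF fU]) auto
  also have "sum (dec c') ?U = c'" by (rule dec_sum[OF fU]) auto
  finally show "c + c' = sum (\<lambda>i. dec c i + dec c' i) {i. dec c i + dec c' i \<noteq> 0}" by simp
qed

lemma dec_lact: "dec (lact r c) = (\<lambda>i. lact r (dec c i))"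
proof (rule dec_unique)
  let ?U = "{i. dec c i \<noteq> 0}"
  have fU: "finite ?U" using dec_fin by blast
  show fin: "finite {i. lact r (dec c i) \<noteq> 0}"
    by (rule finite_subset[OF _ fU]) auto
  show "\<forall>i. lact r (dec c i) \<in> Ci i" using dec_mem Ci_lact by blast
  have "sum (\<lambda>i. lact r (dec c i)) {i. lact r (dec c i) \<noteq> 0} = sum (\<lambda>i. lact r (dec c i)) ?U"
    by (rule sum_supp[symmetric]) (use fU in auto)
  also have "\<dots> = lact r (sum (dec c) ?U)" by (rule lsum[symmetric])
  also have "sum (dec c) ?U = c" by (rule dec_sum[OF fU]) auto
  finally show "lact r c = sum (\<lambda>i. lact r (dec c i)) {i. lact r (dec c i) \<noteq> 0}" by simp
qed

lemma dec_in:
  assumes "m \<in> Ci i"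
  shows "dec m = (\<lambda>j. if j = i then m else 0)"
proof (rule dec_unique)
  show "finite {j. (if j = i then m else 0) \<noteq> 0}" by (rule finite_subset[of _ "{i}"]) auto
  show "\<forall>j. (if j = i then m else 0) \<in> Ci j" using assms Ci_0 by auto
  show "m = sum (\<lambda>j. if j = i then m else 0) {j. (if j = i then m else 0) \<noteq> 0}"
  proof (cases "m = 0")
    case True then show ?thesis by simp
  next
    case False
    then have "{j. (if j = i then m else 0) \<noteq> 0} = {i}" by auto
    then show ?thesis by simp
  qed
qed

lemma ldualU: "h \<in> ldual lact UNIV \<longleftrightarrow> (\<forall>x y. h (x + y) = h x + h y) \<and> (\<forall>r x. h (lact r x) = r * h x)"
  unfolding ldual_def by auto

lemma lin_add: "h \<in> ldual lact UNIV \<Longrightarrow> h (x + y) = h x + h y" unfolding ldualU by blast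
lemma lin_lact: "h \<in> ldual lact UNIV \<Longrightarrow> h (lact r x) = r * h x" unfolding ldualU by blast
lemma lin_0: "h \<in> ldual lact UNIV \<Longrightarrow> h 0 = 0" using lin_add[of h 0 0] by simp
lemma lin_sum: "h \<in> ldual lact UNIV \<Longrightarrow> h (sum g A) = (\<Sum>i\<in>A. h (g i))"
  using sum_comp_morphism[of h g A] lin_0 lin_add by (simp add: o_def)
lemma lin_sum_list: "h \<in> ldual lact UNIV \<Longrightarrow> h (\<Sum>i\<leftarrow>xs. g i) = (\<Sum>i\<leftarrow>xs. h (g i))"
  by (induct xs) (simp_all add: lin_0 lin_add)

lemma ldi_add: "h \<in> ldual lact (Ci i) \<Longrightarrow> x \<in> Ci i \<Longrightarrow> y \<in> Ci i \<Longrightarrow> h (x + y) = h x + h y"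
  unfolding ldual_def by blast
lemma ldi_lact: "h \<in> ldual lact (Ci i) \<Longrightarrow> x \<in> Ci i \<Longrightarrow> h (lact r x) = r * h x"
  unfolding ldual_def by blast
lemma ldi_out: "h \<in> ldual lact (Ci i) \<Longrightarrow> x \<notin> Ci i \<Longrightarrow> h x = 0"
  unfolding ldual_def by blast
lemma ldi_0: "h \<in> ldual lact (Ci i) \<Longrightarrow> h 0 = 0"
  using ldi_add[of h i 0 0] Ci_0 by simp

lemma pi_lin: "h \<in> ldual lact (Ci i) \<Longrightarrow> (\<lambda>c. h (dec c i)) \<in> ldual lact UNIV"
  unfolding ldualU by (auto simp: dec_add dec_lact ldi_add ldi_lact dec_mem)

lemma restr_lin: "n \<in> ldual lact UNIV \<Longrightarrow> (\<lambda>m. if m \<in> Ci i then n m else 0) \<in> ldual lact (Ci i)"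
  unfolding ldual_def by (auto simp: Ci_add Ci_lact)

lemma tsum:
  assumes h: "h \<in> ldual lact UNIV" and t: "teq2 lact ract xs ys"
  shows "(\<Sum>(a, b)\<leftarrow>xs. ract a (h b)) = (\<Sum>(a, b)\<leftarrow>ys. ract a (h b))"
  by (rule teq2_sum[OF _ _ _ t]) (auto simp: radd1 lin_add[OF h] radd2 lin_lact[OF h] rmul)

definition "SD h c = (\<Sum>(a, b)\<leftarrow>Delta c. ract a (h b))"

lemma SD_add: "h \<in> ldual lact UNIV \<Longrightarrow> SD h (x + y) = SD h x + SD h y"
  unfolding SD_def using tsum[OF _ Dadd[of x y]] by simp

lemma SD_0: "h \<in> ldual lact UNIV \<Longrightarrow> SD h 0 = 0"
  using SD_add[of h 0 0] by simp

lemma SD_sum: "h \<in> ldual lact UNIV \<Longrightarrow> SD h (sum g A) = (\<Sum>i\<in>A. SD h (g i))"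
  using sum_comp_morphism[of "SD h" g A] SD_0 SD_add by (simp add: o_def)

abbreviation "rho i \<equiv> subcoact lact ract Delta (Ci i)"

lemma rho_spec:
  assumes m: "m \<in> Ci i"
  shows "set (rho i m) \<subseteq> UNIV \<times> Ci i \<and> teq2 lact ract (rho i m) (Delta m)"
  unfolding subcoact_def
proof (rule someI_ex)
  have "\<forall>m\<in>Ci i. \<exists>ys. set ys \<subseteq> UNIV \<times> Ci i \<and> teq2 lact ract ys (Delta m)"
    using subc unfolding subcomodule_def by (rule conjunct2)
  then show "\<exists>ys. set ys \<subseteq> UNIV \<times> Ci i \<and> teq2 lact ract ys (Delta m)" using m by blast
qed

lemma SD_rho: "h \<in> ldual lact UNIV \<Longrightarrow> m \<in> Ci i \<Longrightarrow> SD h m = (\<Sum>(a, b)\<leftarrow>rho i m. ract a (h b))"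
  unfolding SD_def using tsum[OF _ rho_spec[THEN conjunct2]] by simp

lemma map_cong_set: "(\<And>x. x \<in> set xs \<Longrightarrow> f x = g x) \<Longrightarrow> sum_list (map f xs) = sum_list (map g xs)"
  by (metis map_cong)

lemma SD_key:
  assumes h: "h \<in> ldual lact (Ci i)"
  shows "SD (\<lambda>c. h (dec c i)) m = SD (\<lambda>c. h (dec c i)) (dec m i)"
proof -
  let ?H = "\<lambda>c. h (dec c i)"
  have H: "?H \<in> ldual lact UNIV" by (rule pi_lin[OF h])
  let ?K = "insert i {j. dec m j \<noteq> 0}"
  have fK: "finite ?K" using dec_fin by blast
  have "sum (dec m) ?K = m" by (rule dec_sum[OF fK]) auto
  then have "SD ?H m = SD ?H (sum (dec m) ?K)" by simp
  also have "\<dots> = (\<Sum>j\<in>?K. SD ?H (dec m j))" by (rule SD_sum[OF H])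
  also have "\<dots> = SD ?H (dec m i) + (\<Sum>j\<in>?K - {i}. SD ?H (dec m j))"
    by (rule sum.remove) (use fK in auto)
  also have "(\<Sum>j\<in>?K - {i}. SD ?H (dec m j)) = 0"
  proof (rule sum.neutral, rule ballI)
    fix j assume j: "j \<in> ?K - {i}"
    have "SD ?H (dec m j) = (\<Sum>(a, b)\<leftarrow>rho j (dec m j). ract a (?H b))"
      by (rule SD_rho[OF H dec_mem])
    also have "\<dots> = (\<Sum>(a, b)\<leftarrow>rho j (dec m j). 0)"
    proof (rule map_cong_set)
      fix x assume x: "x \<in> set (rho j (dec m j))"
      obtain a b where ab: "x = (a, b)" by (cases x)
      have "b \<in> Ci j" using rho_spec[OF dec_mem[of m j]] x ab by auto
      then have "dec b i = 0" using dec_in[of b j] j by auto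
      then show "(case x of (a, b) \<Rightarrow> ract a (?H b)) = (case x of (a, b) \<Rightarrow> 0)"
        using ab ldi_0[OF h] by simp
    qed
    also have "\<dots> = 0" by (induct "rho j (dec m j)") auto
    finally show "SD ?H (dec m j) = 0" .
  qed
  finally show ?thesis by simp
qed

end


context cs begin

lemma sum_map_R: "(\<Sum>(n, c)\<leftarrow>map (\<lambda>(n, c). (R n, c)) ps. n m * f c) = (\<Sum>(n, c)\<leftarrow>ps. R n m * f c)"
  by (induct ps) auto

lemma sum_pairs_zero: "(\<Sum>(n, c)\<leftarrow>ps. (0::'z::comm_monoid_add)) = 0"
  by (induct ps) auto

lemma rat_restrict:
  assumes d: "d \<in> ratdual lact ract Delta UNIV"
  shows "(\<lambda>m. if m \<in> Ci i then d m else 0) \<in> ratdual lact ract (rho i) (Ci i)"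
proof -
  have dl: "d \<in> ldual lact UNIV" using d unfolding ratdual_def by blast
  have "\<exists>ps :: (('c \<Rightarrow> 'r) \<times> 'c) list. (\<forall>(n', c)\<in>set ps. n' \<in> ldual lact UNIV) \<and>
      (\<forall>f\<in>ldual lact UNIV. dact ract Delta UNIV d f = (\<lambda>m. \<Sum>(n', c)\<leftarrow>ps. n' m * f c))"
    using d unfolding ratdual_def mem_Collect_eq by (rule conjunct2)
  then obtain ps :: "(('c \<Rightarrow> 'r) \<times> 'c) list" where ps1: "\<forall>(n', c)\<in>set ps. n' \<in> ldual lact UNIV"
    and ps2: "\<forall>f\<in>ldual lact UNIV. dact ract Delta UNIV d f = (\<lambda>m. \<Sum>(n', c)\<leftarrow>ps. n' m * f c)"
    by blast
  let ?R = "\<lambda>n. (\<lambda>m. if m \<in> Ci i then n m else 0)"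
  let ?ps = "map (\<lambda>(n, c). (?R n, c)) ps"
  have A: "?R d \<in> ldual lact (Ci i)" by (rule restr_lin[OF dl])
  have B: "\<forall>(n', c)\<in>set ?ps. n' \<in> ldual lact (Ci i)" using ps1 restr_lin by auto
  have C: "\<forall>f\<in>ldual lact UNIV. dact ract (rho i) (Ci i) (?R d) f = (\<lambda>m. \<Sum>(n', c)\<leftarrow>?ps. n' m * f c)"
  proof
    fix f assume f: "f \<in> ldual lact UNIV"
    have e: "dact ract Delta UNIV d f = (\<lambda>m. \<Sum>(n', c)\<leftarrow>ps. n' m * f c)" using ps2 f by blast
    show "dact ract (rho i) (Ci i) (?R d) f = (\<lambda>m. \<Sum>(n', c)\<leftarrow>?ps. n' m * f c)"
    proof (rule ext)
      fix m
      show "dact ract (rho i) (Ci i) (?R d) f m = (\<Sum>(n', c)\<leftarrow>?ps. n' m * f c)"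
      proof (cases "m \<in> Ci i")
        case True
        have "(\<Sum>(a, b)\<leftarrow>rho i m. ract a (?R d b)) = (\<Sum>(a, b)\<leftarrow>rho i m. ract a (d b))"
        proof (rule map_cong_set)
          fix x assume x: "x \<in> set (rho i m)"
          then have "snd x \<in> Ci i" using rho_spec[OF True] by auto
          then show "(case x of (a, b) \<Rightarrow> ract a (?R d b)) = (case x of (a, b) \<Rightarrow> ract a (d b))"
            by (cases x) auto
        qed
        also have "\<dots> = SD d m" using SD_rho[OF dl True] by simp
        finally have s: "(\<Sum>(a, b)\<leftarrow>rho i m. ract a (?R d b)) = SD d m" .
        have "f (SD d m) = (\<Sum>(n', c)\<leftarrow>ps. n' m * f c)"
          using fun_cong[OF e, of m] unfolding dact_def SD_def by simp
        moreover have "(\<Sum>(n', c)\<leftarrow>?ps. n' m * f c) = (\<Sum>(n, c)\<leftarrow>ps. ?R n m * f c)" by (rule sum_map_R)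
        ultimately show ?thesis using True s unfolding dact_def by simp
      next
        case False
        have "(\<Sum>(n', c)\<leftarrow>?ps. n' m * f c) = (\<Sum>(n, c)\<leftarrow>ps. ?R n m * f c)" by (rule sum_map_R)
        then show ?thesis using False unfolding dact_def by (simp add: sum_pairs_zero)
      qed
    qed
  qed
  show ?thesis unfolding ratdual_def using A B C by blast
qed

lemma lin_sum_list_fun:
  "\<forall>i\<in>set js. g i \<in> ldual lact UNIV \<Longrightarrow> (\<lambda>c. \<Sum>i\<leftarrow>js. g i c) \<in> ldual lact UNIV"
proof (induct js)
  case Nil
  then show ?case unfolding ldualU by simp
next
  case (Cons j js)
  then have gj: "g j \<in> ldual lact UNIV" and IH: "(\<lambda>c. \<Sum>i\<leftarrow>js. g i c) \<in> ldual lact UNIV" by auto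
  show ?case unfolding ldualU
  proof (intro conjI allI)
    fix x y
    show "(\<Sum>i\<leftarrow>j # js. g i (x + y)) = (\<Sum>i\<leftarrow>j # js. g i x) + (\<Sum>i\<leftarrow>j # js. g i y)"
      using lin_add[OF gj, of x y] lin_add[OF IH, of x y] by (simp add: algebra_simps)
  next
    fix r x
    show "(\<Sum>i\<leftarrow>j # js. g i (lact r x)) = r * (\<Sum>i\<leftarrow>j # js. g i x)"
      using lin_lact[OF gj, of r x] lin_lact[OF IH, of r x] by (simp add: algebra_simps)
  qed
qed

lemma SD_sumfun: "SD (\<lambda>b. \<Sum>i\<leftarrow>js. g i b) m = (\<Sum>i\<leftarrow>js. SD (g i) m)"
  unfolding SD_def
proof (induct js)
  case Nil
  then show ?case by (simp add: sum_pairs_zero)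
next
  case (Cons j js)
  have "(\<Sum>(a, b)\<leftarrow>Delta m. ract a (\<Sum>i\<leftarrow>j # js. g i b)) =
        (\<Sum>x\<leftarrow>Delta m. ract (fst x) (g j (snd x)) + ract (fst x) (\<Sum>i\<leftarrow>js. g i (snd x)))"
    by (simp add: radd2 split_def)
  also have "\<dots> = (\<Sum>x\<leftarrow>Delta m. ract (fst x) (g j (snd x))) + (\<Sum>x\<leftarrow>Delta m. ract (fst x) (\<Sum>i\<leftarrow>js. g i (snd x)))"
    by (rule sum_list_addf)
  finally show ?case using Cons by (simp add: split_def)
qed

lemma concat_sum:
  "(\<Sum>(n', c)\<leftarrow>concat (map (\<lambda>i. map (\<lambda>(n, c). ((\<lambda>m. n (dec m i)), c)) (P i)) js). n' m * f c)
   = (\<Sum>i\<leftarrow>js. \<Sum>(n, c)\<leftarrow>P i. n (dec m i) * f c)"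
proof (induct js)
  case Nil
  then show ?case by simp
next
  case (Cons j js)
  then show ?case using sum_map_R[where R="\<lambda>n m. n (dec m j)" and ps="P j" and m=m and f=f] by simp
qed

definition "RP i D ps \<longleftrightarrow> (\<forall>(n', c)\<in>set ps. n' \<in> ldual lact (Ci i)) \<and>
      (\<forall>f\<in>ldual lact UNIV. dact ract (rho i) (Ci i) D f = (\<lambda>m. \<Sum>(n', c)\<leftarrow>ps. n' m * f c))"

lemma rat_combine:
  assumes D: "\<forall>i\<in>set js. D i \<in> ratdual lact ract (rho i) (Ci i)"
  shows "(\<lambda>c. \<Sum>i\<leftarrow>js. D i (dec c i)) \<in> ratdual lact ract Delta UNIV"
proof -
  have "\<forall>i\<in>set js. \<exists>ps. RP i (D i) ps"
  proof
    fix i assume "i \<in> set js"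
    then have "D i \<in> ratdual lact ract (rho i) (Ci i)" using D by blast
    then show "\<exists>ps. RP i (D i) ps" unfolding ratdual_def RP_def mem_Collect_eq by (rule conjunct2)
  qed
  then obtain P where P: "\<forall>i\<in>set js. RP i (D i) (P i)" using bchoice by meson
  have Dl: "D i \<in> ldual lact (Ci i)" if "i \<in> set js" for i
    using D that unfolding ratdual_def by blast
  let ?d = "\<lambda>c. \<Sum>i\<leftarrow>js. D i (dec c i)"
  have lin: "?d \<in> ldual lact UNIV"
    by (rule lin_sum_list_fun) (use Dl pi_lin in blast)
  let ?ps = "concat (map (\<lambda>i. map (\<lambda>(n, c). ((\<lambda>m. n (dec m i)), c)) (P i)) js)"
  have B: "\<forall>(n', c)\<in>set ?ps. n' \<in> ldual lact UNIV"
  proof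
    fix x assume "x \<in> set ?ps"
    then obtain i n c where i: "i \<in> set js" and nc: "(n, c) \<in> set (P i)" and x: "x = ((\<lambda>m. n (dec m i)), c)"
      by auto
    have "n \<in> ldual lact (Ci i)" using P i nc unfolding RP_def by blast
    then show "case x of (n', c) \<Rightarrow> n' \<in> ldual lact UNIV" using x pi_lin by simp
  qed
  have C: "\<forall>f\<in>ldual lact UNIV. dact ract Delta UNIV ?d f = (\<lambda>m. \<Sum>(n', c)\<leftarrow>?ps. n' m * f c)"
  proof
    fix f assume f: "f \<in> ldual lact UNIV"
    show "dact ract Delta UNIV ?d f = (\<lambda>m. \<Sum>(n', c)\<leftarrow>?ps. n' m * f c)"
    proof (rule ext)
      fix m
      have step: "f (SD (\<lambda>c. D i (dec c i)) m) = (\<Sum>(n, c)\<leftarrow>P i. n (dec m i) * f c)"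
        if i: "i \<in> set js" for i
      proof -
        have Di: "D i \<in> ldual lact (Ci i)" by (rule Dl[OF i])
        have Hi: "(\<lambda>c. D i (dec c i)) \<in> ldual lact UNIV" by (rule pi_lin[OF Di])
        have "SD (\<lambda>c. D i (dec c i)) m = SD (\<lambda>c. D i (dec c i)) (dec m i)" by (rule SD_key[OF Di])
        also have "\<dots> = (\<Sum>(a, b)\<leftarrow>rho i (dec m i). ract a (D i (dec b i)))"
          by (rule SD_rho[OF Hi dec_mem])
        also have "\<dots> = (\<Sum>(a, b)\<leftarrow>rho i (dec m i). ract a (D i b))"
        proof (rule map_cong_set)
          fix x assume x: "x \<in> set (rho i (dec m i))"
          then have "snd x \<in> Ci i" using rho_spec[OF dec_mem[of m i]] by auto
          then have "dec (snd x) i = snd x" using dec_in by simp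
          then show "(case x of (a, b) \<Rightarrow> ract a (D i (dec b i))) = (case x of (a, b) \<Rightarrow> ract a (D i b))"
            by (cases x) auto
        qed
        finally have s: "SD (\<lambda>c. D i (dec c i)) m = (\<Sum>(a, b)\<leftarrow>rho i (dec m i). ract a (D i b))" .
        have e: "dact ract (rho i) (Ci i) (D i) f = (\<lambda>m. \<Sum>(n', c)\<leftarrow>P i. n' m * f c)"
          using P i f unfolding RP_def by blast
        show ?thesis using fun_cong[OF e, of "dec m i"] s dec_mem[of m i] unfolding dact_def by simp
      qed
      have "dact ract Delta UNIV ?d f m = f (SD ?d m)" unfolding dact_def SD_def by simp
      also have "SD ?d m = (\<Sum>i\<leftarrow>js. SD (\<lambda>c. D i (dec c i)) m)" by (rule SD_sumfun)
      also have "f \<dots> = (\<Sum>i\<leftarrow>js. f (SD (\<lambda>c. D i (dec c i)) m))" by (rule lin_sum_list[OF f])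
      also have "\<dots> = (\<Sum>i\<leftarrow>js. \<Sum>(n, c)\<leftarrow>P i. n (dec m i) * f c)"
        by (rule map_cong_set) (rule step)
      also have "\<dots> = (\<Sum>(n', c)\<leftarrow>?ps. n' m * f c)" by (rule concat_sum[symmetric])
      finally show "dact ract Delta UNIV ?d f m = (\<Sum>(n', c)\<leftarrow>?ps. n' m * f c)" .
    qed
  qed
  show ?thesis unfolding ratdual_def using lin B C by blast
qed


lemma fdD: "finite_dense M S DD \<Longrightarrow> g \<in> S \<Longrightarrow> finite F \<Longrightarrow> F \<subseteq> M \<Longrightarrow> \<exists>d\<in>DD. \<forall>x\<in>F. d x = g x"
  unfolding finite_dense_def by blast

theorem main:
  "(\<forall>i. finite_dense (Ci i) (ldual lact (Ci i)) (ratdual lact ract (rho i) (Ci i)))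
   \<longleftrightarrow> finite_dense UNIV (ldual lact UNIV) (ratdual lact ract Delta UNIV)"
proof
  assume H: "\<forall>i. finite_dense (Ci i) (ldual lact (Ci i)) (ratdual lact ract (rho i) (Ci i))"
  show "finite_dense UNIV (ldual lact UNIV) (ratdual lact ract Delta UNIV)"
    unfolding finite_dense_def
  proof (intro ballI allI impI)
    fix g and F :: "'c set" assume g: "g \<in> ldual lact UNIV" and F: "finite F \<and> F \<subseteq> UNIV"
    let ?gi = "\<lambda>i m. if m \<in> Ci i then g m else 0"
    have ex: "\<exists>d. d \<in> ratdual lact ract (rho i) (Ci i) \<and> (\<forall>x\<in>(\<lambda>x. dec x i) ` F. d x = ?gi i x)" for i
    proof -
      have gi: "?gi i \<in> ldual lact (Ci i)" by (rule restr_lin[OF g])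
      have Fi: "finite ((\<lambda>x. dec x i) ` F) \<and> (\<lambda>x. dec x i) ` F \<subseteq> Ci i" using F dec_mem by auto
      have Hi: "finite_dense (Ci i) (ldual lact (Ci i)) (ratdual lact ract (rho i) (Ci i))" using H by blast
      have "\<exists>d\<in>ratdual lact ract (rho i) (Ci i). \<forall>x\<in>(\<lambda>x. dec x i) ` F. d x = ?gi i x"
        by (rule fdD[OF Hi gi]) (use Fi in auto)
      then show ?thesis unfolding Bex_def .
    qed
    obtain D where D0: "\<forall>i. D i \<in> ratdual lact ract (rho i) (Ci i) \<and> (\<forall>x\<in>(\<lambda>x. dec x i) ` F. D i x = ?gi i x)"
      using choice[OF allI[OF ex]] by (rule exE)
    have D: "D i \<in> ratdual lact ract (rho i) (Ci i) \<and> (\<forall>x\<in>(\<lambda>x. dec x i) ` F. D i x = ?gi i x)" for i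
      using D0 by (rule spec)
    let ?J = "\<Union>x\<in>F. {i. dec x i \<noteq> 0}"
    have fJ: "finite ?J" using F dec_fin by auto
    obtain js where js: "set js = ?J" "distinct js" using finite_distinct_list[OF fJ] by blast
    let ?d = "\<lambda>c. \<Sum>i\<leftarrow>js. D i (dec c i)"
    have rat: "?d \<in> ratdual lact ract Delta UNIV" by (rule rat_combine, intro ballI, rule D[THEN conjunct1])
    have agree: "\<forall>x\<in>F. ?d x = g x"
    proof
      fix x assume x: "x \<in> F"
      have "?d x = (\<Sum>i\<leftarrow>js. g (dec x i))"
      proof (rule map_cong_set)
        fix i assume "i \<in> set js"
        have "D i (dec x i) = ?gi i (dec x i)" by (rule D[of i, THEN conjunct2, rule_format]) (rule imageI[OF x])
        then show "D i (dec x i) = g (dec x i)" using dec_mem by simp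
      qed
      also have "\<dots> = (\<Sum>i\<in>set js. g (dec x i))" by (rule sum.distinct_set_conv_list[OF js(2), symmetric])
      also have "\<dots> = (\<Sum>i\<in>?J. g (dec x i))" using js(1) by simp
      also have "\<dots> = g (sum (dec x) ?J)" by (rule lin_sum[OF g, symmetric])
      also have "sum (dec x) ?J = x" by (rule dec_sum[OF fJ]) (use x in auto)
      finally show "?d x = g x" .
    qed
    show "\<exists>d\<in>ratdual lact ract Delta UNIV. \<forall>x\<in>F. d x = g x"
    proof (rule bexI[where x="?d"])
      show "\<forall>x\<in>F. ?d x = g x" by (rule agree)
    qed (rule rat)
  qed
next
  assume H: "finite_dense UNIV (ldual lact UNIV) (ratdual lact ract Delta UNIV)"
  show "\<forall>i. finite_dense (Ci i) (ldual lact (Ci i)) (ratdual lact ract (rho i) (Ci i))"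
  proof
    fix i
    show "finite_dense (Ci i) (ldual lact (Ci i)) (ratdual lact ract (rho i) (Ci i))"
      unfolding finite_dense_def
    proof (intro ballI allI impI)
      fix g F assume g: "g \<in> ldual lact (Ci i)" and F: "finite F \<and> F \<subseteq> Ci i"
      have G: "(\<lambda>c. g (dec c i)) \<in> ldual lact UNIV" by (rule pi_lin[OF g])
      have "\<exists>d\<in>ratdual lact ract Delta UNIV. \<forall>x\<in>F. d x = g (dec x i)"
        by (rule fdD[OF H G]) (use F in auto)
      then obtain d where d1: "d \<in> ratdual lact ract Delta UNIV" and d2: "\<forall>x\<in>F. d x = g (dec x i)"
        by blast
      show "\<exists>d\<in>ratdual lact ract (rho i) (Ci i). \<forall>x\<in>F. d x = g x"
      proof (rule bexI[of _ "\<lambda>m. if m \<in> Ci i then d m else 0"])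
        show "\<forall>x\<in>F. (if x \<in> Ci i then d x else 0) = g x"
        proof
          fix x assume x: "x \<in> F"
          then have xi: "x \<in> Ci i" using F by blast
          then show "(if x \<in> Ci i then d x else 0) = g x" using d2 x dec_in[OF xi] by simp
        qed
      qed (rule rat_restrict[OF d1])
    qed
  qed
qed

end

theorem proposition2p4:
  fixes lact :: "'r::ring_1 \<Rightarrow> 'c::ab_group_add \<Rightarrow> 'c"
    and ract :: "'c \<Rightarrow> 'r \<Rightarrow> 'c"
    and Delta :: "'c \<Rightarrow> ('c \<times> 'c) list"
    and eps :: "'c \<Rightarrow> 'r"
    and Ci :: "'i \<Rightarrow> 'c set"
  assumes "coring lact ract Delta eps"
    and "left_alpha lact"
    and "comodule_decomp lact ract Delta Ci"
  shows "(\<forall>i. finite_dense (Ci i) (ldual lact (Ci i))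
                 (ratdual lact ract (subcoact lact ract Delta (Ci i)) (Ci i)))
         \<longleftrightarrow> finite_dense UNIV (ldual lact UNIV) (ratdual lact ract Delta UNIV)"
proof -
  have b: "bimodule lact ract" using assms(1) unfolding coring_def by (rule conjunct1)
  have "(\<forall>x y. teq2 lact ract (Delta (x + y)) (Delta x @ Delta y))"
    using assms(1) unfolding coring_def by (rule conjunct2[THEN conjunct1])
  then have dadd: "\<And>x y. teq2 lact ract (Delta (x + y)) (Delta x @ Delta y)" by blast
  have "cs lact ract Delta Ci" by (rule cs.intro[OF b dadd assms(3)])
  then show ?thesis by (rule cs.main)
qed

end
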